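(* Let $d\ge 2$, let $\bm{k}_1,\ldots,\bm{k}_d\in\mathbb{R}^d$ be a basis of $\mathbb{R}^d$ with $\mathsf{K}=[\bm{k}_1,\ldots,\bm{k}_d]$, and let $\mathfrak{a},\mathfrak{b}\in\mathbb{R}$. For $\bm{u}=[\alpha_1,\ldots,\alpha_d,\beta_1,\ldots,\beta_d]^T\in\mathbb{C}^{2d}$ and $\bm{x}\in\mathbb{R}^d$ let $p(\bm{x};\bm{u})=\sum_{j=1}^d\alpha_j e^{i\bm{k}_j\cdot\bm{x}}+\beta_j e^{-i\bm{k}_j\cdot\bm{x}}$, $\psi(\bm{x};\bm{u})=\mathfrak{a}|p(\bm{x};\bm{u})|^2-\mathfrak{b}|\nabla_{\bm{x}}p(\bm{x};\bm{u})|^2$, and let $\mathsf{Q}(\bm{0})$ be the Hermitian matrix with $\psi(\bm{0};\bm{u})=\bm{u}^*\mathsf{Q}(\bm{0})\bm{u}$. Fix a sign $\pm$ (with $\mp$ denoting the opposite sign), and let $\bm{u}=[\bm{v};\pm\bm{v}]$, $\bm{v}\in\mathbb{R}^d$, be a real unit-norm eigenvector of $\mathsf{Q}(\bm{0})$ with eigenvalue $\lambda$. Let $$T^\pm_{\lambda,\bm{u}}=\{\bm{s}\in\{0,1\}^d:\ [(-1)^{\bm{s}}\odot\bm{v};\mp(-1)^{\bm{s}}\odot\bm{v}]\ \text{is in the }\lambda\text{-eigenspace of }\mathsf{Q}(\bm{0})\}.$$ Then for every $\bm{n}\in\mathbb{Z}^d$ and every $\bm{s}\in T^\pm_{\lambda,\bm{u}}$,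 the set $L_{\lambda,\bm{u}}=\{\bm{x}\in\mathbb{R}^d:\psi(\bm{x};\bm{u})=\lambda\}$ contains the line $$\{\mathsf{K}^{-T}(\theta(-1)^{\bm{s}}+2\pi\bm{n}):\theta\in\mathbb{R}\}.$$
   Context: $[\bm{x};\bm{y}]$ denotes the vertical stacking of vectors $\bm{x},\bm{y}$. For $\bm{s}\in\{0,1\}^d$, $(-1)^{\bm{s}}=[(-1)^{s_1},\ldots,(-1)^{s_d}]$, and $\odot$ is the componentwise (Hadamard) product. *)

theory Defs
  imports "HOL-Analysis.Analysis"
begin

text \<open>u in C^(2d) is indexed by 'd + 'd: Inl j gives alpha_j, Inr j gives beta_j.\<close>

definition pfun :: "real^'d^'d \<Rightarrow> complex^('d+'d) \<Rightarrow> real^'d \<Rightarrow> complex" where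
  "pfun K u x = (\<Sum>j\<in>UNIV. u $ Inl j * exp (\<i> * complex_of_real (column j K \<bullet> x))
                          + u $ Inr j * exp (- \<i> * complex_of_real (column j K \<bullet> x)))"

definition pdp :: "real^'d^'d \<Rightarrow> complex^('d+'d) \<Rightarrow> real^'d \<Rightarrow> 'd \<Rightarrow> complex" where
  "pdp K u x c = vector_derivative (\<lambda>t::real. pfun K u (x + t *\<^sub>R axis c 1)) (at 0)"

definition psi :: "real \<Rightarrow> real \<Rightarrow> real^'d^'d \<Rightarrow> real^'d \<Rightarrow> complex^('d+'d) \<Rightarrow> real" where
  "psi a b K x u = a * (cmod (pfun K u x))\<^sup>2 - b * (\<Sum>c\<in>UNIV. (cmod (pdp K u x c))\<^sup>2)"

definition hermitian :: "complex^'n^'n \<Rightarrow> bool" where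
  "hermitian Q \<longleftrightarrow> (\<forall>i j. Q $ i $ j = cnj (Q $ j $ i))"

definition qform :: "complex^'n^'n \<Rightarrow> complex^'n \<Rightarrow> complex" where
  "qform Q u = (\<Sum>i\<in>UNIV. cnj (u $ i) * (Q *v u) $ i)"

definition stack :: "real^'d \<Rightarrow> real \<Rightarrow> complex^('d+'d)" where
  "stack v \<sigma> = (\<chi> i. case i of Inl j \<Rightarrow> complex_of_real (v $ j)
                             | Inr j \<Rightarrow> complex_of_real (\<sigma> * v $ j))"

definition signs :: "nat^'d \<Rightarrow> real^'d" where
  "signs s = (\<chi> j. (-1) ^ (s $ j))"

definition Tset :: "complex^('d+'d)^('d+'d) \<Rightarrow> real \<Rightarrow> real^'d \<Rightarrow> real \<Rightarrow> (nat^'d) set" where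
  "Tset Q lam v \<sigma> = {s. (\<forall>j. s $ j \<in> {0,1}) \<and>
      (let w = stack (\<chi> j. signs s $ j * v $ j) (- \<sigma>)
       in Q *v w = complex_of_real lam *s w)}"

end

theory Submission
  imports Defs
begin

lemma inv_right: fixes A :: "real^'n^'n" assumes "invertible A"
  shows "A ** matrix_inv A = mat 1"
  using someI_ex[OF assms[unfolded invertible_def]] unfolding matrix_inv_def by blast

lemma col_inner: "column j K \<bullet> x = (transpose K *v x) $ j"
  by (simp add: column_def transpose_def matrix_vector_mult_def inner_vec_def mult.commute)

lemma phase_at: assumes "invertible (K::real^'d^'d)"
  shows "column j K \<bullet> (matrix_inv (transpose K) *v y) = y $ j"
  using inv_right[OF transpose_invertible[OF assms]]
  by (simp add: col_inner matrix_vector_mul_assoc)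

lemma sum_UNIV_plus: "(\<Sum>i\<in>(UNIV::('a::finite+'b::finite) set). f i) = (\<Sum>j\<in>UNIV. f (Inl j)) + (\<Sum>j\<in>UNIV. f (Inr j))"
proof -
  have "(\<Sum>i\<in>(UNIV::('a+'b) set). f i) = sum f (Inl ` UNIV) + sum f (Inr ` UNIV)"
    by (subst UNIV_sum, rule sum.union_disjoint) auto
  also have "\<dots> = (\<Sum>j\<in>UNIV. f (Inl j)) + (\<Sum>j\<in>UNIV. f (Inr j))"
    by (simp add: sum.reindex)
  finally show ?thesis .
qed

lemma pdp_formula:
  "pdp K u x c = (\<Sum>j\<in>UNIV. u $ Inl j * (\<i> * K$c$j) * exp (\<i> * complex_of_real (column j K \<bullet> x))
     + u $ Inr j * (- \<i> * K$c$j) * exp (- \<i> * complex_of_real (column j K \<bullet> x)))"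
proof -
  define g :: "complex \<Rightarrow> complex" where "g = (\<lambda>z. \<Sum>j\<in>UNIV. u $ Inl j * exp (\<i> * (complex_of_real (column j K \<bullet> x) + z * of_real (K$c$j)))
     + u $ Inr j * exp (- \<i> * (complex_of_real (column j K \<bullet> x) + z * of_real (K$c$j))))"
  have eq: "(\<lambda>t::real. pfun K u (x + t *\<^sub>R axis c 1)) = (\<lambda>t. g (of_real t))"
    by (rule ext) (simp add: g_def pfun_def inner_add_right inner_axis column_def algebra_simps)
  have "(g has_field_derivative (\<Sum>j\<in>UNIV. u $ Inl j * (\<i> * K$c$j) * exp (\<i> * complex_of_real (column j K \<bullet> x))
     + u $ Inr j * (- \<i> * K$c$j) * exp (- \<i> * complex_of_real (column j K \<bullet> x)))) (at (of_real 0))"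
    unfolding g_def
    by (auto intro!: derivative_eq_intros sum.cong simp: algebra_simps)
  then show ?thesis unfolding pdp_def eq
    by (intro vector_derivative_at has_vector_derivative_real_field)
qed


lemma exp_i_real: "exp (\<i> * complex_of_real t) = Complex (cos t) (sin t)"
  "exp (- \<i> * complex_of_real t) = Complex (cos t) (- sin t)"
  "exp (- (\<i> * complex_of_real t)) = Complex (cos t) (- sin t)"
  by (simp_all add: exp_eq_polar cis.ctr)

lemma cmod_sq: "(cmod z)\<^sup>2 = (Re z)\<^sup>2 + (Im z)\<^sup>2"
  by (simp add: cmod_power2)

lemma psi_stack:
  "psi a b K x (stack w \<tau>) =
     a * ((\<Sum>j\<in>UNIV. w$j*(1+\<tau>)* cos (column j K \<bullet> x))\<^sup>2 + (\<Sum>j\<in>UNIV. w$j*(1-\<tau>)* sin (column j K \<bullet> x))\<^sup>2)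
   - b * (\<Sum>c\<in>UNIV. (\<Sum>j\<in>UNIV. w$j*K$c$j*(-1-\<tau>)* sin (column j K \<bullet> x))\<^sup>2
                     + (\<Sum>j\<in>UNIV. w$j*K$c$j*(1-\<tau>)* cos (column j K \<bullet> x))\<^sup>2)"
proof -
  have p: "(cmod (pfun K (stack w \<tau>) x))\<^sup>2 = (\<Sum>j\<in>UNIV. w$j*(1+\<tau>)* cos (column j K \<bullet> x))\<^sup>2 + (\<Sum>j\<in>UNIV. w$j*(1-\<tau>)* sin (column j K \<bullet> x))\<^sup>2"
    unfolding cmod_sq pfun_def stack_def Re_sum Im_sum
    by (simp add: exp_i_real algebra_simps)
  have d: "(cmod (pdp K (stack w \<tau>) x c))\<^sup>2 = (\<Sum>j\<in>UNIV. w$j*K$c$j*(-1-\<tau>)* sin (column j K \<bullet> x))\<^sup>2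
                     + (\<Sum>j\<in>UNIV. w$j*K$c$j*(1-\<tau>)* cos (column j K \<bullet> x))\<^sup>2" for c
    unfolding cmod_sq pdp_formula stack_def Re_sum Im_sum
    by (simp add: exp_i_real algebra_simps)
  show ?thesis unfolding psi_def p d ..
qed


lemma eig_qform:
  assumes "Q *v z = complex_of_real lam *s z"
  shows "qform Q z = complex_of_real (lam * (norm z)\<^sup>2)"
proof -
  have "(norm z)\<^sup>2 = (\<Sum>i\<in>UNIV. (cmod (z$i))\<^sup>2)"
    unfolding norm_vec_def L2_set_def by (simp add: sum_nonneg)
  moreover have "qform Q z = (\<Sum>i\<in>UNIV. complex_of_real lam * complex_of_real ((cmod (z$i))\<^sup>2))"
    unfolding qform_def assms complex_norm_square
    by (intro sum.cong) (auto simp: algebra_simps)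
  ultimately show ?thesis by (simp add: sum_distrib_left)
qed

lemma norm_stack: "(norm (stack u \<tau>))\<^sup>2 = (1 + \<tau>\<^sup>2) * (\<Sum>j\<in>UNIV. (u$j)\<^sup>2)"
proof -
  have "(norm (stack u \<tau>))\<^sup>2 = (\<Sum>i\<in>UNIV. (cmod (stack u \<tau> $i))\<^sup>2)"
    unfolding norm_vec_def L2_set_def by (simp add: sum_nonneg)
  also have "\<dots> = (1 + \<tau>\<^sup>2) * (\<Sum>j\<in>UNIV. (u$j)\<^sup>2)"
    unfolding sum_UNIV_plus by (simp add: stack_def sum_distrib_left power_mult_distrib algebra_simps sum.distrib norm_mult)
  finally show ?thesis .
qed

lemma psi0_eig:
  assumes "\<forall>u. complex_of_real (psi a b K 0 u) = qform Q u"
    and "Q *v z = complex_of_real lam *s z"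
  shows "psi a b K 0 z = lam * (norm z)\<^sup>2"
  using assms eig_qform[OF assms(2)] by (metis of_real_eq_iff)


lemma trig_eps:
  assumes "e = 1 \<or> e = (-1::real)"
  shows "cos (\<theta> * e + 2 * pi * real_of_int m) = cos \<theta>"
    "sin (\<theta> * e + 2 * pi * real_of_int m) = e * sin \<theta>"
  using assms by (auto simp: cos_add sin_add)

theorem lemma2p7:
  fixes K :: "real^'d^'d" and a b :: real
    and Q :: "complex^('d+'d)^('d+'d)" and \<sigma> lam :: real and v :: "real^'d"
  assumes "CARD('d) \<ge> 2"
    and "invertible K"
    and "hermitian Q"
    and "\<forall>u. complex_of_real (psi a b K 0 u) = qform Q u"
    and "\<sigma> = 1 \<or> \<sigma> = -1"
    and "Q *v stack v \<sigma> = complex_of_real lam *s stack v \<sigma>"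
    and "norm (stack v \<sigma>) = 1"
  shows "\<forall>n::int^'d. \<forall>s\<in>Tset Q lam v \<sigma>. \<forall>\<theta>::real.
           psi a b K (matrix_inv (transpose K) *v
                (\<theta> *\<^sub>R signs s + (2 * pi) *\<^sub>R (\<chi> j. real_of_int (n $ j)))) (stack v \<sigma>) = lam"
proof (intro allI ballI)
  fix n :: "int^'d" and s \<theta>
  assume sT: "s \<in> Tset Q lam v \<sigma>"
  define e where "e = signs s"
  define w where "w = (\<chi> j. e $ j * v $ j)"
  have e01: "e$j = 1 \<or> e$j = -1" for j
  proof -
    have "s $ j = 0 \<or> s $ j = 1" using sT unfolding Tset_def by auto
    then show ?thesis unfolding e_def signs_def by auto
  qed
  have e2: "(e$j)\<^sup>2 = 1" for j using e01[of j] by auto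
  have Tw: "Q *v stack w (- \<sigma>) = complex_of_real lam *s stack w (- \<sigma>)"
    using sT unfolding Tset_def w_def e_def Let_def by auto
  have s2: "\<sigma>\<^sup>2 = 1" using assms(5) by auto
  have nv: "(1 + \<sigma>\<^sup>2) * (\<Sum>j\<in>UNIV. (v$j)\<^sup>2) = 1"
    using norm_stack[of v \<sigma>] assms(7) by simp
  have ww: "(\<Sum>j\<in>UNIV. (w$j)\<^sup>2) = (\<Sum>j\<in>UNIV. (v$j)\<^sup>2)"
    by (simp add: w_def power_mult_distrib e2)
  have L1: "psi a b K 0 (stack v \<sigma>) = lam"
    using psi0_eig[OF assms(4) assms(6)] assms(7) by simp
  have L2: "psi a b K 0 (stack w (- \<sigma>)) = lam"
    using psi0_eig[OF assms(4) Tw] norm_stack[of w "-\<sigma>"] ww nv by simp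
  define x where "x = matrix_inv (transpose K) *v
                (\<theta> *\<^sub>R signs s + (2 * pi) *\<^sub>R (\<chi> j. real_of_int (n $ j)))"
  have ph: "column j K \<bullet> x = \<theta> * e$j + 2 * pi * real_of_int (n$j)" for j
    unfolding x_def phase_at[OF assms(2)] e_def by simp
  have cs: "cos (column j K \<bullet> x) = cos \<theta>" "sin (column j K \<bullet> x) = e$j * sin \<theta>" for j
    unfolding ph using trig_eps[OF e01] by auto
  define A where "A = (\<Sum>j\<in>UNIV. v$j)"
  define B where "B = (\<lambda>c. \<Sum>j\<in>UNIV. e$j * v$j * K$c$j)"
  define C where "C = (\<Sum>j\<in>UNIV. e$j * v$j)"
  define D where "D = (\<lambda>c. \<Sum>j\<in>UNIV. v$j * K$c$j)"
  show "psi a b K x (stack v \<sigma>) = lam"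
    using assms(5)
  proof
    assume [simp]: "\<sigma> = 1"
    have l1: "lam = a * (2 * A)\<^sup>2"
      using L1[symmetric] unfolding psi_stack
      by (simp add: A_def sum_distrib_left algebra_simps)
    have l2: "lam = - (b * (\<Sum>c\<in>UNIV. (2 * B c)\<^sup>2))"
      using L2[symmetric] unfolding psi_stack
      by (simp add: B_def w_def sum_distrib_left algebra_simps)
    have t1: "(\<Sum>j\<in>UNIV. v$j*(1+\<sigma>)* cos (column j K \<bullet> x)) = 2 * cos \<theta> * A"
      unfolding cs A_def by (simp add: sum_distrib_left algebra_simps)
    have t2: "(\<Sum>j\<in>UNIV. v$j*(1-\<sigma>)* sin (column j K \<bullet> x)) = 0"
      by simp
    have t3: "(\<Sum>j\<in>UNIV. v$j*K$c$j*(-1-\<sigma>)* sin (column j K \<bullet> x)) = -2 * sin \<theta> * B c" for c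
      unfolding cs B_def by (simp add: sum_distrib_left sum_negf algebra_simps)
    have t4: "(\<Sum>j\<in>UNIV. v$j*K$c$j*(1-\<sigma>)* cos (column j K \<bullet> x)) = 0" for c
      by simp
    have "psi a b K x (stack v \<sigma>) = a * (2 * cos \<theta> * A)\<^sup>2 - b * (\<Sum>c\<in>UNIV. (-2 * sin \<theta> * B c)\<^sup>2)"
      unfolding psi_stack t1 t2 t3 t4 by simp
    also have "\<dots> = (cos \<theta>)\<^sup>2 * (a * (2 * A)\<^sup>2) + (sin \<theta>)\<^sup>2 * (- (b * (\<Sum>c\<in>UNIV. (2 * B c)\<^sup>2)))"
      by (simp add: power_mult_distrib sum_distrib_left algebra_simps)
    also have "\<dots> = (cos \<theta>)\<^sup>2 * lam + (sin \<theta>)\<^sup>2 * lam"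
      by (simp only: l1[symmetric] l2[symmetric])
    also have "\<dots> = lam"
      by (simp add: distrib_right[symmetric])
    finally show ?thesis .
  next
    assume [simp]: "\<sigma> = -1"
    have l1: "lam = - (b * (\<Sum>c\<in>UNIV. (2 * D c)\<^sup>2))"
      using L1[symmetric] unfolding psi_stack
      by (simp add: D_def sum_distrib_left algebra_simps)
    have l2: "lam = a * (2 * C)\<^sup>2"
      using L2[symmetric] unfolding psi_stack
      by (simp add: C_def w_def sum_distrib_left algebra_simps)
    have t1: "(\<Sum>j\<in>UNIV. v$j*(1+\<sigma>)* cos (column j K \<bullet> x)) = 0"
      by simp
    have t2: "(\<Sum>j\<in>UNIV. v$j*(1-\<sigma>)* sin (column j K \<bullet> x)) = 2 * sin \<theta> * C"
      unfolding cs C_def by (simp add: sum_distrib_left algebra_simps)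
    have t3: "(\<Sum>j\<in>UNIV. v$j*K$c$j*(-1-\<sigma>)* sin (column j K \<bullet> x)) = 0" for c
      by simp
    have t4: "(\<Sum>j\<in>UNIV. v$j*K$c$j*(1-\<sigma>)* cos (column j K \<bullet> x)) = 2 * cos \<theta> * D c" for c
      unfolding cs D_def by (simp add: sum_distrib_left algebra_simps)
    have "psi a b K x (stack v \<sigma>) = a * (2 * sin \<theta> * C)\<^sup>2 - b * (\<Sum>c\<in>UNIV. (2 * cos \<theta> * D c)\<^sup>2)"
      unfolding psi_stack t1 t2 t3 t4 by simp
    also have "\<dots> = (sin \<theta>)\<^sup>2 * (a * (2 * C)\<^sup>2) + (cos \<theta>)\<^sup>2 * (- (b * (\<Sum>c\<in>UNIV. (2 * D c)\<^sup>2)))"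
      by (simp add: power_mult_distrib sum_distrib_left algebra_simps)
    also have "\<dots> = (sin \<theta>)\<^sup>2 * lam + (cos \<theta>)\<^sup>2 * lam"
      by (simp only: l1[symmetric] l2[symmetric])
    also have "\<dots> = lam"
      by (simp add: distrib_right[symmetric])
    finally show ?thesis .
  qed
qed

end
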